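(* Let $I\in\mathbb S$ and $\xi\in\mathbb{O}$. Then: (1) $N(g_{I,\xi})(x)=|\Delta_{\xi_I}(x)|^2+2|\xi_I^\perp|^2\big(|x|^2-2\mathrm{Re}(x)\mathrm{Re}(\xi_I)+|\xi_I|^2\big)+|\xi_I^\perp|^4\ge0$ for every $x\in\mathbb{O}$; (2) the zero set of $N(g_{I,\xi})$ equals $\mathbb S_{I,\xi}$.
   Context: Octonions $\mathbb{O}=\mathbb{H}+\ell\mathbb{H}$ (product $(a+\ell b)(c+\ell d)=(ac-d\bar b)+\ell(\bar a d+cb)$, conjugation $\overline{a+\ell b}=\bar a-\ell b$), identified with $\mathbb{R}^8$ with Euclidean norm; $\mathrm{Re}(x)=\frac12(x+\bar x)$, $\mathrm{Im}(x)=\frac12(x-\bar x)$; $\mathbb S=\{I:I^2=-1\}$, $\mathbb C_I=\mathrm{Span}_{\mathbb R}(1,I)$. Slice functions on $\mathbb{O}$: $f(\alpha+\beta J)=F_1(\alpha,\beta)+JF_2(\alpha,\beta)$ ($J\in\mathbb S$) for a stem function $(F_1,F_2):\mathbb{R}^2\to\mathbb{O}^2$, $F_1$ even and $F_2$ odd in $\beta$. The slice product $f\cdot g$ of slice functions induced by $(F_1,F_2),(G_1,G_2)$ is induced by $(F_1G_1-F_2G_2,F_1G_2+F_2G_1)$; $f^c$ is induced by $(\overline{F_1},\overline{F_2})$; the normal function is $N(f)=f\cdot f^c$. For $\eta\in\mathbb{O}$, $\Delta_\eta(x)=x^2-2x\mathrm{Re}(\eta)+|\eta|^2$ and $\mathbb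 S_\eta=\{\mathrm{Re}(\eta)+J|\mathrm{Im}(\eta)|:J\in\mathbb S\}$. For $\xi\in\mathbb{O}$: $\xi_I$ is the orthogonal projection of $\xi$ onto $\mathbb C_I$, $\xi_I^\perp=\xi-\xi_I$, $g_{I,\xi}:\mathbb{O}\to\mathbb{O}$ is the slice function $g_{I,\xi}(x)=|x|^2-x\overline{\xi_I}-\overline{x}\xi_I+|\xi|^2$ (equal to $(\xi_I-x)\cdot(\overline{\xi_I}-\overline x)+|\xi_I^\perp|^2$), and $\mathbb S_{I,\xi}=\mathbb S_\xi$ if $\xi\in\mathbb C_I$, $\mathbb S_{I,\xi}=\emptyset$ otherwise. *)

theory Defs
  imports Complex_Main
begin

datatype quat = Quat (q0: real) (q1: real) (q2: real) (q3: real)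

instantiation quat :: "{zero,one,plus,minus,uminus,times}"
begin
definition "0 = Quat 0 0 0 0"
definition "1 = Quat 1 0 0 0"
definition "a + b = Quat (q0 a + q0 b) (q1 a + q1 b) (q2 a + q2 b) (q3 a + q3 b)"
definition "a - b = Quat (q0 a - q0 b) (q1 a - q1 b) (q2 a - q2 b) (q3 a - q3 b)"
definition "- a = Quat (- q0 a) (- q1 a) (- q2 a) (- q3 a)"
definition "a * b = Quat
   (q0 a * q0 b - q1 a * q1 b - q2 a * q2 b - q3 a * q3 b)
   (q0 a * q1 b + q1 a * q0 b + q2 a * q3 b - q3 a * q2 b)
   (q0 a * q2 b - q1 a * q3 b + q2 a * q0 b + q3 a * q1 b)
   (q0 a * q3 b + q1 a * q2 b - q2 a * q1 b + q3 a * q0 b)"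
instance ..
end

definition qcnj :: "quat \<Rightarrow> quat" where
  "qcnj a = Quat (q0 a) (- q1 a) (- q2 a) (- q3 a)"

definition qsc :: "real \<Rightarrow> quat \<Rightarrow> quat" where
  "qsc r a = Quat (r * q0 a) (r * q1 a) (r * q2 a) (r * q3 a)"

definition qinner :: "quat \<Rightarrow> quat \<Rightarrow> real" where
  "qinner a b = q0 a * q0 b + q1 a * q1 b + q2 a * q2 b + q3 a * q3 b"

text \<open>Oct a b represents a + l b.\<close>
datatype oct = Oct (ofst: quat) (osnd: quat)

instantiation oct :: "{zero,one,plus,minus,uminus,times}"
begin
definition "0 = Oct 0 0"
definition "1 = Oct 1 0"
definition "x + y = Oct (ofst x + ofst y) (osnd x + osnd y)"
definition "x - y = Oct (ofst x - ofst y) (osnd x - osnd y)"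
definition "- x = Oct (- ofst x) (- osnd x)"
text \<open>(a + l b)(c + l d) = (ac - d conj(b)) + l (conj(a) d + c b)\<close>
definition "x * y = Oct (ofst x * ofst y - osnd y * qcnj (osnd x))
                        (qcnj (ofst x) * osnd y + ofst y * osnd x)"
instance ..
end

definition ocnj :: "oct \<Rightarrow> oct" where
  "ocnj x = Oct (qcnj (ofst x)) (- osnd x)"

definition osc :: "real \<Rightarrow> oct \<Rightarrow> oct" where
  "osc r x = Oct (qsc r (ofst x)) (qsc r (osnd x))"

definition ocr :: "real \<Rightarrow> oct" where
  "ocr r = osc r 1"

definition oinner :: "oct \<Rightarrow> oct \<Rightarrow> real" where
  "oinner x y = qinner (ofst x) (ofst y) + qinner (osnd x) (osnd y)"

definition onorm :: "oct \<Rightarrow> real" where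
  "onorm x = sqrt (oinner x x)"

definition oRe :: "oct \<Rightarrow> oct" where
  "oRe x = osc (1/2) (x + ocnj x)"

definition oIm :: "oct \<Rightarrow> oct" where
  "oIm x = osc (1/2) (x - ocnj x)"

definition reP :: "oct \<Rightarrow> real" where
  "reP x = q0 (ofst x)"

definition osph :: "oct set" where
  "osph = {I. I * I = - 1}"

definition CI :: "oct \<Rightarrow> oct set" where
  "CI I = {osc a 1 + osc b I | a b. True}"

definition is_stem :: "(real \<Rightarrow> real \<Rightarrow> oct) \<Rightarrow> (real \<Rightarrow> real \<Rightarrow> oct) \<Rightarrow> bool" where
  "is_stem F1 F2 \<longleftrightarrow> (\<forall>a b. F1 a (- b) = F1 a b \<and> F2 a (- b) = - F2 a b)"

definition is_stem_of :: "(oct \<Rightarrow> oct) \<Rightarrow> (real \<Rightarrow> real \<Rightarrow> oct) \<Rightarrow> (real \<Rightarrow> real \<Rightarrow> oct) \<Rightarrow> bool" where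
  "is_stem_of f F1 F2 \<longleftrightarrow> is_stem F1 F2 \<and>
     (\<forall>a b J. J \<in> osph \<longrightarrow> f (ocr a + osc b J) = F1 a b + J * F2 a b)"

text \<open>the slice function induced by a stem function (x = Re x + |Im x| J with J = Im x / |Im x|)\<close>
definition induced :: "(real \<Rightarrow> real \<Rightarrow> oct) \<Rightarrow> (real \<Rightarrow> real \<Rightarrow> oct) \<Rightarrow> oct \<Rightarrow> oct" where
  "induced F1 F2 x =
     (if oIm x = 0 then F1 (reP x) 0
      else F1 (reP x) (onorm (oIm x)) + osc (1 / onorm (oIm x)) (oIm x) * F2 (reP x) (onorm (oIm x)))"

definition slice_function :: "(oct \<Rightarrow> oct) \<Rightarrow> bool" where
  "slice_function f \<longleftrightarrow> (\<exists>F1 F2. is_stem_of f F1 F2)"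

definition slice_mult :: "(oct \<Rightarrow> oct) \<Rightarrow> (oct \<Rightarrow> oct) \<Rightarrow> oct \<Rightarrow> oct" where
  "slice_mult f g =
     (let (F1, F2) = (SOME (F1, F2). is_stem_of f F1 F2);
          (G1, G2) = (SOME (G1, G2). is_stem_of g G1 G2)
      in induced (\<lambda>a b. F1 a b * G1 a b - F2 a b * G2 a b)
                 (\<lambda>a b. F1 a b * G2 a b + F2 a b * G1 a b))"

definition slice_cnj :: "(oct \<Rightarrow> oct) \<Rightarrow> oct \<Rightarrow> oct" where
  "slice_cnj f =
     (let (F1, F2) = (SOME (F1, F2). is_stem_of f F1 F2)
      in induced (\<lambda>a b. ocnj (F1 a b)) (\<lambda>a b. ocnj (F2 a b)))"

definition normal_fun :: "(oct \<Rightarrow> oct) \<Rightarrow> oct \<Rightarrow> oct" where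
  "normal_fun f = slice_mult f (slice_cnj f)"

definition Delta :: "oct \<Rightarrow> oct \<Rightarrow> oct" where
  "Delta \<eta> x = x * x - osc (2 * reP \<eta>) x + ocr ((onorm \<eta>)\<^sup>2)"

definition S_of :: "oct \<Rightarrow> oct set" where
  "S_of \<eta> = {oRe \<eta> + osc (onorm (oIm \<eta>)) J | J. J \<in> osph}"

text \<open>orthogonal projection onto C_I = span(1, I); for I in the sphere, {1, I} is orthonormal\<close>
definition projI :: "oct \<Rightarrow> oct \<Rightarrow> oct" where
  "projI I \<xi> = osc (oinner \<xi> 1) 1 + osc (oinner \<xi> I) I"

definition perpI :: "oct \<Rightarrow> oct \<Rightarrow> oct" where
  "perpI I \<xi> = \<xi> - projI I \<xi>"

definition gIxi :: "oct \<Rightarrow> oct \<Rightarrow> oct \<Rightarrow> oct" where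
  "gIxi I \<xi> x = ocr ((onorm x)\<^sup>2) - x * ocnj (projI I \<xi>) - ocnj x * projI I \<xi> + ocr ((onorm \<xi>)\<^sup>2)"

definition S_Ixi :: "oct \<Rightarrow> oct \<Rightarrow> oct set" where
  "S_Ixi I \<xi> = (if \<xi> \<in> CI I then S_of \<xi> else {})"

end

theory Submission
  imports Defs
begin

lemmas qdefs = zero_quat_def one_quat_def plus_quat_def minus_quat_def uminus_quat_def times_quat_def qcnj_def qsc_def qinner_def
lemmas odefs = zero_oct_def one_oct_def plus_oct_def minus_oct_def uminus_oct_def times_oct_def ocnj_def osc_def ocr_def oinner_def reP_def oIm_def oRe_def

lemma oct_eq_iff: "x = y \<longleftrightarrow> q0 (ofst x) = q0 (ofst y) \<and> q1 (ofst x) = q1 (ofst y) \<and> q2 (ofst x) = q2 (ofst y) \<and> q3 (ofst x) = q3 (ofst y)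
  \<and> q0 (osnd x) = q0 (osnd y) \<and> q1 (osnd x) = q1 (osnd y) \<and> q2 (osnd x) = q2 (osnd y) \<and> q3 (osnd x) = q3 (osnd y)"
  by (cases x; cases y; rename_tac a b c d; case_tac a; case_tac b; case_tac c; case_tac d; auto)

lemma sq_formula: "y * y = osc (2 * reP y) y - ocr (oinner y y)"
  unfolding oct_eq_iff by (simp add: odefs qdefs algebra_simps power2_eq_square)

lemma osph_char:
  assumes "J \<in> osph" shows "reP J = 0" "oinner J J = 1"
proof -
  obtain a b c d e f g h where J: "J = Oct (Quat a b c d) (Quat e f g h)"
    by (metis oct.exhaust quat.exhaust)
  have "J * J = - 1" using assms by (simp add: osph_def)
  hence eqs: "a*a - b*b - c*c - d*d - e*e - f*f - g*g - h*h = -1"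
    "a*b = 0" "a*c = 0" "a*d = 0" "a*e = 0" "a*f = 0" "a*g = 0" "a*h = 0"
    unfolding J oct_eq_iff by (simp_all add: odefs qdefs algebra_simps)
  have "a = 0"
  proof (rule ccontr)
    assume "a \<noteq> 0"
    hence "b = 0" "c = 0" "d = 0" "e = 0" "f = 0" "g = 0" "h = 0" using eqs by auto
    with eqs(1) have "a*a = -1" by simp
    moreover have "a*a \<ge> 0" by simp
    ultimately show False by linarith
  qed
  thus "reP J = 0" "oinner J J = 1" using eqs(1) unfolding J
    by (simp_all add: odefs qdefs algebra_simps)
qed

lemma osph_intro: assumes "reP y = 0" "oinner y y = 1" shows "y \<in> osph"
  using assms unfolding osph_def
  by (simp add: sq_formula, simp add: oct_eq_iff odefs qdefs)

lemma J0_osph: "Oct (Quat 0 1 0 0) 0 \<in> osph"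
  by (rule osph_intro) (simp_all add: odefs qdefs)

lemma alt: "x * (x * y) = (x * x) * (y::oct)"
  unfolding oct_eq_iff by (simp add: odefs qdefs algebra_simps)

lemma onorm_sq: "(onorm x)^2 = oinner x x"
  unfolding onorm_def by (simp add: oinner_def qinner_def)

lemma oinner_nonneg: "oinner x x \<ge> 0"
  by (simp add: oinner_def qinner_def)

lemma oinner_zero: "oinner x x = 0 \<longleftrightarrow> x = 0"
proof
  assume h: "oinner x x = 0"
  obtain a b c d e f g k where J: "x = Oct (Quat a b c d) (Quat e f g k)"
    by (metis oct.exhaust quat.exhaust)
  have "a*a + b*b + c*c + d*d + e*e + f*f + g*g + k*k = 0" using h unfolding J by (simp add: oinner_def qinner_def)
  hence "a = 0 \<and> b = 0 \<and> c = 0 \<and> d = 0 \<and> e = 0 \<and> f = 0 \<and> g = 0 \<and> k = 0"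
  proof -
    have s: "a*a \<ge> 0" "b*b \<ge> 0" "c*c \<ge> 0" "d*d \<ge> 0" "e*e \<ge> 0" "f*f \<ge> 0" "g*g \<ge> 0" "k*k \<ge> 0" by simp_all
    hence "a*a = 0 \<and> b*b = 0 \<and> c*c = 0 \<and> d*d = 0 \<and> e*e = 0 \<and> f*f = 0 \<and> g*g = 0 \<and> k*k = 0"
      using \<open>a*a + b*b + c*c + d*d + e*e + f*f + g*g + k*k = 0\<close> by linarith
    thus ?thesis by simp
  qed
  thus "x = 0" unfolding J by (simp add: odefs qdefs)
qed (simp add: odefs qdefs)

lemma reP_lin: "reP (ocr a + osc b J) = a + b * reP J"
  by (simp add: odefs qdefs)

lemma oIm_lin: "reP J = 0 \<Longrightarrow> oIm (ocr a + osc b J) = osc b J"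
  unfolding oct_eq_iff by (simp add: odefs qdefs)

lemma oinner_osc: "oinner (osc b J) (osc b J) = b^2 * oinner J J"
  by (simp add: odefs qdefs algebra_simps power2_eq_square)

lemma onorm_osc: "onorm (osc b J) = \<bar>b\<bar> * onorm J"
  unfolding onorm_def oinner_osc by (simp add: real_sqrt_mult)

lemma osph_onorm: "J \<in> osph \<Longrightarrow> onorm J = 1"
  using osph_char unfolding onorm_def by simp

lemma osc_osc: "osc a (osc b y) = osc (a*b) y"
  unfolding oct_eq_iff by (simp add: odefs qdefs)

lemma osc_one: "osc 1 y = y"
  unfolding oct_eq_iff by (simp add: odefs qdefs)


lemma neg_neg_mult: "osc (-1) J * (- y) = J * y"
  unfolding oct_eq_iff by (simp add: odefs qdefs)

lemma neg_eq_zero: "(x::oct) = - x \<Longrightarrow> x = 0"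
  unfolding oct_eq_iff by (simp add: odefs qdefs)

lemma mult_zero_r: "(x::oct) * 0 = 0"
  unfolding oct_eq_iff by (simp add: odefs qdefs)

lemma add_zero_r: "(x::oct) + 0 = x"
  unfolding oct_eq_iff by (simp add: odefs qdefs)

lemma osc_zero_iff: "J \<in> osph \<Longrightarrow> osc b J = 0 \<longleftrightarrow> b = 0"
proof
  assume "J \<in> osph" "osc b J = 0"
  hence "onorm (osc b J) = 0" by (simp add: onorm_def oinner_def qinner_def zero_oct_def zero_quat_def)
  thus "b = 0" using onorm_osc osph_onorm \<open>J \<in> osph\<close> by simp
qed (simp add: odefs qdefs oct_eq_iff)

lemma induced_stem:
  assumes st: "is_stem G1 G2" shows "is_stem_of (induced G1 G2) G1 G2"
  unfolding is_stem_of_def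
proof (intro conjI allI impI)
  show "is_stem G1 G2" by fact
  fix a b J assume J: "J \<in> osph"
  note Jc = osph_char[OF J]
  have r: "reP (ocr a + osc b J) = a" using reP_lin Jc by simp
  have i: "oIm (ocr a + osc b J) = osc b J" using oIm_lin Jc by simp
  have n: "onorm (osc b J) = \<bar>b\<bar>" using onorm_osc osph_onorm[OF J] by simp
  show "induced G1 G2 (ocr a + osc b J) = G1 a b + J * G2 a b"
  proof (cases "b = 0")
    case True
    have "G2 a 0 = - G2 a 0" using st unfolding is_stem_def by (metis minus_zero)
    hence "G2 a 0 = 0" by (rule neg_eq_zero)
    thus ?thesis using True unfolding induced_def r i
      by (simp add: osc_zero_iff[OF J] mult_zero_r add_zero_r)
  next
    case False
    hence nz: "osc b J \<noteq> 0" using osc_zero_iff[OF J] by simp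
    show ?thesis
    proof (cases "b > 0")
      case True
      thus ?thesis unfolding induced_def r i n using nz by (simp add: osc_osc osc_one)
    next
      case False
      with \<open>b \<noteq> 0\<close> have "\<bar>b\<bar> = - b" "1 / \<bar>b\<bar> * b = -1" by auto
      moreover have "G1 a (-b) = G1 a b" "G2 a (-b) = - G2 a b" using st unfolding is_stem_def by auto
      ultimately show ?thesis unfolding induced_def r i n using nz by (simp add: osc_osc neg_neg_mult)
    qed
  qed
qed

lemma stem_unique:
  assumes "is_stem_of f F1 F2" "is_stem_of f G1 G2" shows "G1 = F1" "G2 = F2"
proof -
  define J0 where "J0 = Oct (Quat 0 1 0 0) 0"
  have J0: "J0 \<in> osph" unfolding J0_def by (rule J0_osph)
  have mJ0: "- J0 \<in> osph" by (rule osph_intro) (simp_all add: J0_def odefs qdefs)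
  have e: "F1 a b = G1 a b \<and> F2 a b = G2 a b" for a b
  proof -
    have 1: "F1 a b + J0 * F2 a b = G1 a b + J0 * G2 a b"
      using assms J0 unfolding is_stem_of_def by metis
    have 2: "F1 a b + (- J0) * F2 a b = G1 a b + (- J0) * G2 a b"
      using assms mJ0 unfolding is_stem_of_def by metis
    from 1 2 show ?thesis unfolding J0_def oct_eq_iff
      by (simp add: odefs qdefs)
  qed
  thus "G1 = F1" "G2 = F2" by (auto intro!: ext)
qed

lemma some_stem:
  assumes "is_stem_of f F1 F2" shows "(SOME (G1, G2). is_stem_of f G1 G2) = (F1, F2)"
proof -
  have ex: "\<exists>p. (\<lambda>(G1, G2). is_stem_of f G1 G2) p" using assms by auto
  obtain G1 G2 where p: "(SOME (G1, G2). is_stem_of f G1 G2) = (G1, G2)" by fastforce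
  have "is_stem_of f G1 G2" using someI_ex[OF ex] unfolding p by simp
  thus ?thesis using stem_unique[OF assms] p by simp
qed

lemma g_brute: "reP J = 0 \<Longrightarrow> reP I = 0 \<Longrightarrow>
  ocr u - (ocr a + osc b J) * ocnj (osc p0 1 + osc p1 I) - ocnj (ocr a + osc b J) * (osc p0 1 + osc p1 I) + ocr K
   = ocr (u - 2*a*p0 + K) + J * osc (2*b*p1) I"
  unfolding oct_eq_iff by (simp add: odefs qdefs algebra_simps)

lemma norm_brute: "oinner (ocr a + osc b J) (ocr a + osc b J) = a^2 + 2*a*b*reP J + b^2 * oinner J J"
  by (simp add: odefs qdefs algebra_simps power2_eq_square)

lemma g_stem:
  assumes I: "I \<in> osph"
  shows "is_stem_of (gIxi I \<xi>) (\<lambda>a b. ocr (a^2 + b^2 - 2*a*oinner \<xi> 1 + (onorm \<xi>)^2))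
            (\<lambda>a b. osc (2*b*oinner \<xi> I) I)"
  unfolding is_stem_of_def
proof (intro conjI allI impI)
  show "is_stem (\<lambda>a b. ocr (a^2 + b^2 - 2*a*oinner \<xi> 1 + (onorm \<xi>)^2))
            (\<lambda>a b. osc (2*b*oinner \<xi> I) I)"
    unfolding is_stem_def oct_eq_iff by (simp add: odefs qdefs)
  fix a b J assume J: "J \<in> osph"
  note Jc = osph_char[OF J] and Ic = osph_char[OF I]
  have n: "(onorm (ocr a + osc b J))^2 = a^2 + b^2" unfolding onorm_sq norm_brute using Jc by simp
  show "gIxi I \<xi> (ocr a + osc b J) = ocr (a^2 + b^2 - 2*a*oinner \<xi> 1 + (onorm \<xi>)^2) + J * osc (2*b*oinner \<xi> I) I"
    unfolding gIxi_def projI_def n using g_brute[OF Jc(1) Ic(1)] by simp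
qed

lemma H1_gen: "ocr r * ocnj (ocr r) - osc c I * ocnj (osc c I) = ocr (r^2 - c^2 * oinner I I)"
  unfolding oct_eq_iff by (simp add: odefs qdefs algebra_simps power2_eq_square)

lemma H2_brute: "reP I = 0 \<Longrightarrow> ocr r * ocnj (osc c I) + osc c I * ocnj (ocr r) = 0"
  unfolding oct_eq_iff by (simp add: odefs qdefs algebra_simps)

lemma ocnj_neg: "ocnj (- y) = - ocnj y"
  unfolding oct_eq_iff by (simp add: odefs qdefs)

lemma onorm_zero: "onorm 0 = 0"
  by (simp add: onorm_def oinner_def qinner_def zero_oct_def zero_quat_def)

lemma N_formula:
  assumes I: "I \<in> osph"
  shows "normal_fun (gIxi I \<xi>) x = ocr ((reP x ^2 + (onorm (oIm x))^2 - 2 * reP x * oinner \<xi> 1 + (onorm \<xi>)^2)^2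
             - (2 * onorm (oIm x) * oinner \<xi> I)^2)"
proof -
  define F1 where "F1 = (\<lambda>a b. ocr (a^2 + b^2 - 2*a*oinner \<xi> 1 + (onorm \<xi>)^2))"
  define F2 where "F2 = (\<lambda>(a::real) b. osc (2*b*oinner \<xi> I) I)"
  have st: "is_stem_of (gIxi I \<xi>) F1 F2" unfolding F1_def F2_def by (rule g_stem[OF I])
  have sc: "slice_cnj (gIxi I \<xi>) = induced (\<lambda>a b. ocnj (F1 a b)) (\<lambda>a b. ocnj (F2 a b))"
    unfolding slice_cnj_def some_stem[OF st] by simp
  have "is_stem F1 F2" using st unfolding is_stem_of_def by simp
  hence "is_stem (\<lambda>a b. ocnj (F1 a b)) (\<lambda>a b. ocnj (F2 a b))"
    unfolding is_stem_def by (simp add: ocnj_neg)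
  hence st2: "is_stem_of (slice_cnj (gIxi I \<xi>)) (\<lambda>a b. ocnj (F1 a b)) (\<lambda>a b. ocnj (F2 a b))"
    unfolding sc by (rule induced_stem)
  have nf: "normal_fun (gIxi I \<xi>) = induced (\<lambda>a b. F1 a b * ocnj (F1 a b) - F2 a b * ocnj (F2 a b))
                 (\<lambda>a b. F1 a b * ocnj (F2 a b) + F2 a b * ocnj (F1 a b))"
    unfolding normal_fun_def slice_mult_def some_stem[OF st] some_stem[OF st2] by simp
  note Ic = osph_char[OF I]
  have h1: "F1 a b * ocnj (F1 a b) - F2 a b * ocnj (F2 a b) = ocr ((a^2 + b^2 - 2*a*oinner \<xi> 1 + (onorm \<xi>)^2)^2 - (2*b*oinner \<xi> I)^2)" for a b
    unfolding F1_def F2_def H1_gen Ic(2) by simp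
  have h2: "F1 a b * ocnj (F2 a b) + F2 a b * ocnj (F1 a b) = 0" for a b
    unfolding F1_def F2_def using H2_brute[OF Ic(1)] by simp
  show ?thesis unfolding nf induced_def h1 h2 mult_zero_r add_zero_r
    by (simp add: onorm_zero)
qed

lemma reP_q: "reP (osc p0 1 + osc p1 I) = p0 + p1 * reP I"
  by (simp add: odefs qdefs)
lemma inner_q: "oinner (osc p0 1 + osc p1 I) (osc p0 1 + osc p1 I) = p0^2 + 2*p0*p1*reP I + p1^2 * oinner I I"
  by (simp add: odefs qdefs algebra_simps power2_eq_square)
lemma inner_split: "oinner x x = oinner y y + 2*oinner y (x - y) + oinner (x-y) (x-y)"
  by (simp add: odefs qdefs algebra_simps)
lemma inner_diff: "oinner y (x - y) = oinner y x - oinner y y"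
  by (simp add: odefs qdefs algebra_simps)
lemma inner_q_x: "oinner (osc p0 1 + osc p1 I) x = p0 * oinner x 1 + p1 * oinner x I"
  by (simp add: odefs qdefs algebra_simps)
lemma inner_x_re: "oinner x x = reP x ^2 + oinner (oIm x) (oIm x)"
  by (simp add: odefs qdefs algebra_simps power2_eq_square)
lemma delta_brute: "oinner (x*x - osc (2*p) x + ocr c) (x*x - osc (2*p) x + ocr c)
   = (reP x^2 - oinner (oIm x) (oIm x) - 2*p*reP x + c)^2 + 4*(reP x - p)^2 * oinner (oIm x) (oIm x)"
  by (simp add: odefs qdefs algebra_simps power2_eq_square)

lemma real_key:
  fixes a p0 p1 b E :: real
  assumes "b \<ge> 0" "E \<ge> 0"
  shows "(a^2 + b^2 - 2*a*p0 + (p0^2 + p1^2 + E))^2 - (2*b*p1)^2 = 0 \<longleftrightarrow> a = p0 \<and> b = \<bar>p1\<bar> \<and> E = 0"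
proof -
  define r where "r = a^2 + b^2 - 2*a*p0 + (p0^2 + p1^2 + E)"
  have f: "r^2 - (2*b*p1)^2 = (r - 2*b*\<bar>p1\<bar>) * (r + 2*b*\<bar>p1\<bar>)"
    by (simp add: algebra_simps power2_eq_square)
  have m: "r - 2*b*\<bar>p1\<bar> = (a - p0)^2 + (b - \<bar>p1\<bar>)^2 + E"
    unfolding r_def by (simp add: algebra_simps power2_eq_square)
  have p: "r + 2*b*\<bar>p1\<bar> = (a - p0)^2 + (b + \<bar>p1\<bar>)^2 + E"
    unfolding r_def by (simp add: algebra_simps power2_eq_square)
  have s1: "(a - p0)^2 \<ge> 0" "(b - \<bar>p1\<bar>)^2 \<ge> 0" "(b + \<bar>p1\<bar>)^2 \<ge> 0" by simp_all
  show ?thesis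
  proof
    assume "(a^2 + b^2 - 2*a*p0 + (p0^2 + p1^2 + E))^2 - (2*b*p1)^2 = 0"
    hence "r - 2*b*\<bar>p1\<bar> = 0 \<or> r + 2*b*\<bar>p1\<bar> = 0" unfolding f[unfolded r_def] r_def by simp
    hence "(a - p0)^2 = 0 \<and> (b - \<bar>p1\<bar>)^2 = 0 \<and> E = 0 \<or> (a - p0)^2 = 0 \<and> (b + \<bar>p1\<bar>)^2 = 0 \<and> E = 0"
      unfolding m p using s1 assms by linarith
    thus "a = p0 \<and> b = \<bar>p1\<bar> \<and> E = 0" using assms by auto
  next
    assume "a = p0 \<and> b = \<bar>p1\<bar> \<and> E = 0"
    hence "r - 2*b*\<bar>p1\<bar> = 0" unfolding m by simp
    thus "(a^2 + b^2 - 2*a*p0 + (p0^2 + p1^2 + E))^2 - (2*b*p1)^2 = 0" using f unfolding r_def by simp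
  qed
qed

lemma ocr_zero: "ocr v = 0 \<longleftrightarrow> v = 0"
  unfolding oct_eq_iff by (simp add: odefs qdefs)
lemma oRe_eq: "oRe x = ocr (reP x)"
  unfolding oct_eq_iff by (simp add: odefs qdefs)
lemma decomp: "x = ocr (reP x) + oIm x"
  unfolding oct_eq_iff by (simp add: odefs qdefs)
lemma reP_oIm: "reP (oIm x) = 0"
  by (simp add: odefs qdefs)
lemma reP_osc: "reP (osc c y) = c * reP y"
  by (simp add: odefs qdefs)
lemma oIm_q: "reP I = 0 \<Longrightarrow> oIm (osc p0 1 + osc p1 I) = osc p1 I"
  unfolding oct_eq_iff by (simp add: odefs qdefs)
lemma inner_CI1: "oinner (osc a 1 + osc b I) 1 = a + b*reP I"
  by (simp add: odefs qdefs)
lemma inner_CI2: "oinner (osc a 1 + osc b I) I = a*reP I + b*oinner I I"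
  by (simp add: odefs qdefs algebra_simps)
lemma sub_self: "x - x = (0::oct)"
  unfolding oct_eq_iff by (simp add: odefs qdefs)
lemma sub_zero: "x - y = (0::oct) \<Longrightarrow> x = y"
  unfolding oct_eq_iff by (simp add: odefs qdefs)

theorem lemma2p16:
  fixes I \<xi> :: oct
  assumes "I \<in> osph"
  shows "(\<forall>x. normal_fun (gIxi I \<xi>) x =
              ocr ((onorm (Delta (projI I \<xi>) x))\<^sup>2
                   + 2 * (onorm (perpI I \<xi>))\<^sup>2 *
                       ((onorm x)\<^sup>2 - 2 * reP x * reP (projI I \<xi>) + (onorm (projI I \<xi>))\<^sup>2)
                   + (onorm (perpI I \<xi>))^4)
         \<and> (onorm (Delta (projI I \<xi>) x))\<^sup>2
                   + 2 * (onorm (perpI I \<xi>))\<^sup>2 *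
                       ((onorm x)\<^sup>2 - 2 * reP x * reP (projI I \<xi>) + (onorm (projI I \<xi>))\<^sup>2)
                   + (onorm (perpI I \<xi>))^4 \<ge> 0)
       \<and> {x. normal_fun (gIxi I \<xi>) x = 0} = S_Ixi I \<xi>"
proof -
  note Ic = osph_char[OF assms]
  define p0 where "p0 = oinner \<xi> 1"
  define p1 where "p1 = oinner \<xi> I"
  define q where "q = projI I \<xi>"
  define E where "E = (onorm (perpI I \<xi>))^2"
  have hq: "q = osc p0 1 + osc p1 I" unfolding q_def projI_def p0_def p1_def ..
  have rq: "reP q = p0" unfolding hq reP_q Ic by simp
  have nq: "(onorm q)^2 = p0^2 + p1^2" unfolding onorm_sq hq inner_q Ic by simp
  have E0: "E \<ge> 0" unfolding E_def by simp
  have Ed: "E = oinner (\<xi> - q) (\<xi> - q)" unfolding E_def onorm_sq perpI_def q_def ..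
  have hK: "(onorm \<xi>)^2 = p0^2 + p1^2 + E"
  proof -
    have "oinner q (\<xi> - q) = 0" unfolding inner_diff
      using nq unfolding onorm_sq hq inner_q_x p0_def p1_def by (simp add: power2_eq_square)
    thus ?thesis unfolding onorm_sq inner_split[of \<xi> q] Ed using nq onorm_sq by simp
  qed
  have NF: "normal_fun (gIxi I \<xi>) x = ocr ((reP x ^2 + (onorm (oIm x))^2 - 2 * reP x * p0 + (p0^2 + p1^2 + E))^2
             - (2 * onorm (oIm x) * p1)^2)" for x
    unfolding N_formula[OF assms] p0_def[symmetric] p1_def[symmetric] hK ..
  have hx: "(onorm x)^2 = (reP x)^2 + (onorm (oIm x))^2" for x
    unfolding onorm_sq by (rule inner_x_re)
  have hD: "(onorm (Delta q x))^2 = (reP x^2 - (onorm (oIm x))^2 - 2*p0*reP x + (p0^2 + p1^2))^2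
       + 4*(reP x - p0)^2 * (onorm (oIm x))^2" for x
  proof -
    have "(onorm (Delta q x))^2 = oinner (Delta q x) (Delta q x)" by (rule onorm_sq)
    also have "\<dots> = (reP x^2 - (onorm (oIm x))^2 - 2*p0*reP x + (p0^2 + p1^2))^2
       + 4*(reP x - p0)^2 * (onorm (oIm x))^2"
      unfolding Delta_def delta_brute rq nq onorm_sq[of "oIm x"] ..
    finally show ?thesis .
  qed
  have part1: "normal_fun (gIxi I \<xi>) x =
              ocr ((onorm (Delta (projI I \<xi>) x))\<^sup>2
                   + 2 * (onorm (perpI I \<xi>))\<^sup>2 *
                       ((onorm x)\<^sup>2 - 2 * reP x * reP (projI I \<xi>) + (onorm (projI I \<xi>))\<^sup>2)
                   + (onorm (perpI I \<xi>))^4)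
         \<and> (onorm (Delta (projI I \<xi>) x))\<^sup>2
                   + 2 * (onorm (perpI I \<xi>))\<^sup>2 *
                       ((onorm x)\<^sup>2 - 2 * reP x * reP (projI I \<xi>) + (onorm (projI I \<xi>))\<^sup>2)
                   + (onorm (perpI I \<xi>))^4 \<ge> 0" for x
  proof -
    have e4: "(onorm (perpI I \<xi>))^4 = E^2" unfolding E_def by simp
    define a where "a = reP x"
    define b where "b = onorm (oIm x)"
    have br: "(onorm x)\<^sup>2 - 2 * reP x * reP (projI I \<xi>) + (onorm (projI I \<xi>))\<^sup>2
        = (a - p0)^2 + b^2 + p1^2"
      unfolding q_def[symmetric] rq nq hx[of x] a_def[symmetric] b_def[symmetric] by (simp add: power2_eq_square algebra_simps)
    have br2: "(onorm x)\<^sup>2 - 2 * a * reP q + (onorm q)\<^sup>2 = (a - p0)^2 + b^2 + p1^2"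
      using br unfolding q_def a_def .
    have "(a^2 + b^2 - 2*a*p0 + (p0^2 + p1^2 + E))^2 - (2*b*p1)^2 =
        ((a^2 - b^2 - 2*p0*a + (p0^2 + p1^2))^2 + 4*(a - p0)^2 * b^2) + 2 * E * ((a - p0)^2 + b^2 + p1^2) + E^2"
      by (simp add: power2_eq_square algebra_simps)
    hence eq: "normal_fun (gIxi I \<xi>) x = ocr ((onorm (Delta (projI I \<xi>) x))\<^sup>2
                   + 2 * (onorm (perpI I \<xi>))\<^sup>2 *
                       ((onorm x)\<^sup>2 - 2 * reP x * reP (projI I \<xi>) + (onorm (projI I \<xi>))\<^sup>2)
                   + (onorm (perpI I \<xi>))^4)"
      unfolding NF e4 E_def[symmetric] q_def[symmetric] hD a_def[symmetric] b_def[symmetric] br2 by simp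
    have "0 \<le> 2 * (onorm (perpI I \<xi>))\<^sup>2 *
                       ((onorm x)\<^sup>2 - 2 * reP x * reP (projI I \<xi>) + (onorm (projI I \<xi>))\<^sup>2)"
      unfolding br by simp
    moreover have "0 \<le> (onorm (Delta (projI I \<xi>) x))\<^sup>2" "0 \<le> (onorm (perpI I \<xi>))^4" by simp_all
    ultimately show ?thesis using eq by linarith
  qed
  have zero_iff: "normal_fun (gIxi I \<xi>) x = 0 \<longleftrightarrow> reP x = p0 \<and> onorm (oIm x) = \<bar>p1\<bar> \<and> E = 0" for x
    unfolding NF ocr_zero
    by (rule real_key) (simp_all add: onorm_def E0 oinner_nonneg)
  have part2: "{x. normal_fun (gIxi I \<xi>) x = 0} = S_Ixi I \<xi>"
  proof (cases "\<xi> \<in> CI I")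
    case False
    have "E \<noteq> 0"
    proof
      assume "E = 0"
      hence "\<xi> - q = 0" unfolding Ed oinner_zero .
      hence "\<xi> = q" by (rule sub_zero)
      hence "\<xi> \<in> CI I" unfolding hq CI_def by blast
      with False show False by simp
    qed
    thus ?thesis unfolding S_Ixi_def using False zero_iff by auto
  next
    case True
    then obtain a b where xa: "\<xi> = osc a 1 + osc b I" unfolding CI_def by blast
    have pa: "p0 = a" "p1 = b" unfolding p0_def p1_def xa inner_CI1 inner_CI2 Ic by simp_all
    have xq: "\<xi> = q" unfolding hq pa xa ..
    have E00: "E = 0" unfolding Ed xq sub_self oinner_zero ..
    have S: "S_of \<xi> = {ocr p0 + osc \<bar>p1\<bar> J | J. J \<in> osph}"
    proof -
      have "oRe \<xi> = ocr p0" unfolding oRe_eq xq rq ..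
      moreover have "onorm (oIm \<xi>) = \<bar>p1\<bar>" unfolding xq hq oIm_q[OF Ic(1)] onorm_osc osph_onorm[OF assms] by simp
      ultimately show ?thesis unfolding S_of_def by simp
    qed
    have "reP x = p0 \<and> onorm (oIm x) = \<bar>p1\<bar> \<longleftrightarrow> (\<exists>J. x = ocr p0 + osc \<bar>p1\<bar> J \<and> J \<in> osph)" for x
    proof
      assume h: "reP x = p0 \<and> onorm (oIm x) = \<bar>p1\<bar>"
      show "\<exists>J. x = ocr p0 + osc \<bar>p1\<bar> J \<and> J \<in> osph"
      proof (cases "p1 = 0")
        case True
        hence "oinner (oIm x) (oIm x) = 0" using h onorm_sq[of "oIm x"] by simp
        hence "oIm x = 0" using oinner_zero by simp
        have "x = ocr (reP x) + oIm x" by (rule decomp)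
        also have "\<dots> = ocr p0 + osc \<bar>p1\<bar> I" using \<open>oIm x = 0\<close> h True
          unfolding oct_eq_iff by (simp add: odefs qdefs)
        finally have "x = ocr p0 + osc \<bar>p1\<bar> I" .
        thus ?thesis using assms by blast
      next
        case False
        define J where "J = osc (1 / \<bar>p1\<bar>) (oIm x)"
        have "J \<in> osph"
        proof (rule osph_intro)
          show "reP J = 0" unfolding J_def reP_osc reP_oIm by simp
          have o: "oinner (oIm x) (oIm x) = p1^2" using h onorm_sq[of "oIm x"] by simp
          show "oinner J J = 1" unfolding J_def oinner_osc o using False
            by (simp add: power_divide)
        qed
        moreover have "x = ocr p0 + osc \<bar>p1\<bar> J"
        proof -
          have "x = ocr (reP x) + oIm x" by (rule decomp)
          also have "\<dots> = ocr p0 + osc \<bar>p1\<bar> J" unfolding J_def osc_osc using False h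
            by (simp add: osc_one)
          finally show ?thesis .
        qed
        ultimately show ?thesis by blast
      qed
    next
      assume "\<exists>J. x = ocr p0 + osc \<bar>p1\<bar> J \<and> J \<in> osph"
      then obtain J where x: "x = ocr p0 + osc \<bar>p1\<bar> J" and J: "J \<in> osph" by blast
      note Jc = osph_char[OF J]
      show "reP x = p0 \<and> onorm (oIm x) = \<bar>p1\<bar>"
        unfolding x reP_lin oIm_lin[OF Jc(1)] onorm_osc osph_onorm[OF J] Jc by simp
    qed
    thus ?thesis unfolding S_Ixi_def using True S zero_iff E00 by auto
  qed
  show ?thesis using part1 part2 by blast
qed

end
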